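(* Starting from the freshly initialized sampling data structure (no point opened), the total running time of opening any set $S$ of $k$ points of $P$ by successive calls to MultiTreeOpen is $O(n\log(d\Delta)\log n)$.
   Context: $P\subseteq\mathbb{R}^d$ has $n$ points, $\Delta$ is the ratio of maximum to minimum distance between distinct points of $P$. Tree embedding: compute $\mathrm{MaxDist}$, an upper bound on the maximum pairwise distance within factor $2$ of it; add a uniformly random shift $s\in[0,\mathrm{MaxDist}]$ to each coordinate of all points; the root (height $0$) is the axis-aligned cube of side $2\,\mathrm{MaxDist}$ centered at an input point; recursively each node cube of side $L$ at height $i$ is split into $2^d$ subcubes of side $L/2$, nonempty ones become children connected by edges of weight $\sqrt d\,\mathrm{MaxDist}/2^i$, until each cube has at most one point (all leaves at height $H=O(\log(d\Delta))$). $\mathrm{TreeDist}_T$ is the shortest-path distance in tree $T$. The multi-tree embedding consists of three such trees with independent shifts; $\mathrm{MultiTreeDist}$ is the minimum of the three tree distances, $\mathrm{MultiTreeDist}(x,\emptyset)^2=M:=16d\,\mathrm{MaxDist}^2$. Sampling data structure: weights $w_x$ for $x\in P$, initially $M$; a balanced binary "sample-tree" with one leaf per point of $P$, each node's weight being the sum of $w_x$ over leaves in its subtree; a mark bit, initially unmarked, for every node of each of the three trees; and for each tree $T$ and node $v$ the set $P_T(v)\subseteq P$ of points in $v$'s subtree. MultiTreeOpen$(x)$: for each of the three trees $T$: let $v_0$ be the leaf of $T$ containing $x$; traverse towards the root forming a path $v_0,v_1,\dots,v_\ell$ until $v_\ell$ is the root or the parent of $v_\ell$ is marked; mark $v_0,\dots,v_\ell$;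 for each $y\in P_T(v_\ell)$, if $\mathrm{TreeDist}_T(y,x)^2<w_y$ then set $w_y\leftarrow\mathrm{TreeDist}_T(y,x)^2$ and traverse the sample-tree from $y$'s leaf to the root updating node weights depending on $w_y$. *)

theory Defs
  imports Complex_Main
begin

(* Points of R^d are represented as functions nat => real whose coordinates
   at indices >= d are zero; d is an explicit parameter. *)
type_synonym pt = "nat \<Rightarrow> real"
(* a node of a quadtree: (height, integer index of its grid cell) *)
type_synonym node = "nat \<times> (nat \<Rightarrow> int)"

definition edist :: "nat \<Rightarrow> pt \<Rightarrow> pt \<Rightarrow> real" where
  "edist d x y = sqrt (\<Sum>j<d. (x j - y j)^2)"

definition max_dist :: "pt set \<Rightarrow> nat \<Rightarrow> real" where
  "max_dist P d = Max {edist d x y | x y. x \<in> P \<and> y \<in> P}"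

definition min_dist :: "pt set \<Rightarrow> nat \<Rightarrow> real" where
  "min_dist P d = Min {edist d x y | x y. x \<in> P \<and> y \<in> P \<and> x \<noteq> y}"

definition aspect_ratio :: "pt set \<Rightarrow> nat \<Rightarrow> real" where
  "aspect_ratio P d = max_dist P d / min_dist P d"

(* The root cube has side 2*MD and is anchored at p0 - MD (centered at the
   input point p0); at height i the cubes have side 2*MD/2^i. *)
definition cell :: "nat \<Rightarrow> pt \<Rightarrow> real \<Rightarrow> real \<Rightarrow> nat \<Rightarrow> pt \<Rightarrow> (nat \<Rightarrow> int)" where
  "cell d p0 MD s i x =
     (if i = 0 then (\<lambda>_. 0)
      else (\<lambda>j. if j < d then \<lfloor>(x j + s - (p0 j - MD)) / (2 * MD / 2 ^ i)\<rfloor> else 0))"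

definition tnode :: "nat \<Rightarrow> pt \<Rightarrow> real \<Rightarrow> real \<Rightarrow> nat \<Rightarrow> pt \<Rightarrow> node" where
  "tnode d p0 MD s i x = (i, cell d p0 MD s i x)"

(* height H of the tree: first height at which every cube holds at most one point;
   all leaves are at height H *)
definition theight :: "pt set \<Rightarrow> nat \<Rightarrow> pt \<Rightarrow> real \<Rightarrow> real \<Rightarrow> nat" where
  "theight P d p0 MD s =
     (LEAST i. \<forall>x\<in>P. \<forall>y\<in>P. x \<noteq> y \<longrightarrow> cell d p0 MD s i x \<noteq> cell d p0 MD s i y)"

definition subtree_pts :: "pt set \<Rightarrow> nat \<Rightarrow> pt \<Rightarrow> real \<Rightarrow> real \<Rightarrow> node \<Rightarrow> pt set" where
  "subtree_pts P d p0 MD s v = {y \<in> P. tnode d p0 MD s (fst v) y = v}"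

(* TreeDist_T(x,y): edges from a node at height i to its children weigh sqrt d * MD / 2^i;
   j is the height of the lowest common ancestor *)
definition tree_dist :: "pt set \<Rightarrow> nat \<Rightarrow> pt \<Rightarrow> real \<Rightarrow> real \<Rightarrow> pt \<Rightarrow> pt \<Rightarrow> real" where
  "tree_dist P d p0 MD s x y =
     (let H = theight P d p0 MD s;
          j = (GREATEST j. j \<le> H \<and> cell d p0 MD s j x = cell d p0 MD s j y)
      in 2 * (\<Sum>i\<in>{j..<H}. sqrt (real d) * MD / 2 ^ i))"

(* length l of the path v_0 (leaf, height H), ..., v_l: stop at the root or
   when the parent of v_l is marked *)
definition path_len :: "pt set \<Rightarrow> nat \<Rightarrow> pt \<Rightarrow> real \<Rightarrow> real \<Rightarrow> node set \<Rightarrow> pt \<Rightarrow> nat" where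
  "path_len P d p0 MD s mk x =
     (let H = theight P d p0 MD s
      in LEAST k. k = H \<or> tnode d p0 MD s (H - Suc k) x \<in> mk)"

(* cost of one root-to-leaf update in the balanced sample-tree over n leaves *)
definition sample_update_cost :: "nat \<Rightarrow> nat" where
  "sample_update_cost n = nat \<lceil>log 2 (real n)\<rceil> + 1"

(* One tree T of MultiTreeOpen(x): returns new weights, new marks and the number of
   elementary steps: one per node visited/marked on the path, one per point y
   of P_T(v_l) inspected, plus a sample-tree leaf-to-root update when w_y changes. *)
definition open_tree :: "pt set \<Rightarrow> nat \<Rightarrow> pt \<Rightarrow> real \<Rightarrow> real \<Rightarrow> (pt \<Rightarrow> real) \<Rightarrow> node set \<Rightarrow> pt
      \<Rightarrow> (pt \<Rightarrow> real) \<times> node set \<times> nat" where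
  "open_tree P d p0 MD s w mk x =
     (let H = theight P d p0 MD s;
          l = path_len P d p0 MD s mk x;
          Q = subtree_pts P d p0 MD s (tnode d p0 MD s (H - l) x);
          td = (\<lambda>y. (tree_dist P d p0 MD s y x)^2);
          upd = (\<lambda>y. td y < w y);
          slen = sample_update_cost (card P)
      in ((\<lambda>y. if y \<in> Q \<and> upd y then td y else w y),
          mk \<union> {tnode d p0 MD s (H - k) x | k. k \<le> l},
          (l + 1) + (\<Sum>y\<in>Q. 1 + (if upd y then slen else 0))))"

(* state: weights w, and marks (set of marked nodes) for trees 0,1,2 *)
type_synonym state = "(pt \<Rightarrow> real) \<times> (nat \<Rightarrow> node set)"

definition multi_open :: "pt set \<Rightarrow> nat \<Rightarrow> pt \<Rightarrow> real \<Rightarrow> (nat \<Rightarrow> real) \<Rightarrow> state \<Rightarrow> pt \<Rightarrow> state \<times> nat" where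
  "multi_open P d p0 MD sh st x =
     (case st of (w0, mk) \<Rightarrow>
      (case open_tree P d p0 MD (sh 0) w0 (mk 0) x of (w1, m1, c1) \<Rightarrow>
      (case open_tree P d p0 MD (sh 1) w1 (mk 1) x of (w2, m2, c2) \<Rightarrow>
      (case open_tree P d p0 MD (sh 2) w2 (mk 2) x of (w3, m3, c3) \<Rightarrow>
        ((w3, mk(0 := m1, 1 := m2, 2 := m3)), c1 + c2 + c3)))))"

fun open_seq :: "pt set \<Rightarrow> nat \<Rightarrow> pt \<Rightarrow> real \<Rightarrow> (nat \<Rightarrow> real) \<Rightarrow> state \<Rightarrow> pt list \<Rightarrow> nat" where
  "open_seq P d p0 MD sh st [] = 0"
| "open_seq P d p0 MD sh st (x # xs) =
     (case multi_open P d p0 MD sh st x of (st', c) \<Rightarrow> c + open_seq P d p0 MD sh st' xs)"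

definition init_state :: "nat \<Rightarrow> real \<Rightarrow> state" where
  "init_state d MD = ((\<lambda>_. 16 * real d * MD^2), (\<lambda>_. {}))"

end

theory Submission imports Defs begin

definition NN :: "pt set \<Rightarrow> nat \<Rightarrow> pt \<Rightarrow> real \<Rightarrow> real \<Rightarrow> node set" where
 "NN P d p0 MD s = (\<lambda>(i,y). tnode d p0 MD s i y) ` ({..theight P d p0 MD s} \<times> P)"

definition phi :: "pt set \<Rightarrow> nat \<Rightarrow> pt \<Rightarrow> real \<Rightarrow> real \<Rightarrow> node set \<Rightarrow> nat" where
 "phi P d p0 MD s mk = card mk + (1 + sample_update_cost (card P)) * (\<Sum>v\<in>mk. card (subtree_pts P d p0 MD s v))"

definition sepd :: "pt set \<Rightarrow> nat \<Rightarrow> pt \<Rightarrow> real \<Rightarrow> real \<Rightarrow> bool" where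
 "sepd P d p0 MD s = (\<forall>x\<in>P. \<forall>y\<in>P. x \<noteq> y \<longrightarrow>
     cell d p0 MD s (theight P d p0 MD s) x \<noteq> cell d p0 MD s (theight P d p0 MD s) y)"

definition good :: "pt set \<Rightarrow> nat \<Rightarrow> pt \<Rightarrow> real \<Rightarrow> real \<Rightarrow> node set \<Rightarrow> pt set \<Rightarrow> bool" where
 "good P d p0 MD s mk Z = (mk \<subseteq> NN P d p0 MD s \<and>
     (\<forall>z\<in>Z. tnode d p0 MD s (theight P d p0 MD s) z \<notin> mk))"

lemma finite_NN: "finite P \<Longrightarrow> finite (NN P d p0 MD s)"
  unfolding NN_def by auto

lemma open_tree_step:
  assumes fin: "finite P" and sep: "sepd P d p0 MD s" and xP: "x \<in> P"
    and g: "good P d p0 MD s mk (insert x Z)" and xZ: "x \<notin> Z" and ZP: "Z \<subseteq> P"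
    and ot: "open_tree P d p0 MD s w mk x = (w', mk', c)"
  shows "c + phi P d p0 MD s mk \<le> phi P d p0 MD s mk'" "good P d p0 MD s mk' Z"
proof -
  define H where "H = theight P d p0 MD s"
  define l where "l = path_len P d p0 MD s mk x"
  define A where "A = {tnode d p0 MD s (H - k) x | k. k \<le> l}"
  define Q where "Q = subtree_pts P d p0 MD s (tnode d p0 MD s (H - l) x)"
  define slen where "slen = sample_update_cost (card P)"
  define upd where "upd = (\<lambda>y. (tree_dist P d p0 MD s y x)^2 < w y)"
  have mk': "mk' = mk \<union> A" and c: "c = (l + 1) + (\<Sum>y\<in>Q. 1 + (if upd y then slen else 0))"
    using ot unfolding open_tree_def Let_def H_def l_def A_def Q_def slen_def upd_def by auto
  have lH: "l \<le> H" unfolding l_def path_len_def Let_def H_def by (rule Least_le) simp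
  have notin: "tnode d p0 MD s (H - k) x \<notin> mk" if "k \<le> l" for k
  proof (cases k)
    case 0 then show ?thesis using g unfolding good_def H_def by auto
  next
    case (Suc k')
    then have "k' < l" using that by simp
    then have "\<not> (k' = H \<or> tnode d p0 MD s (H - Suc k') x \<in> mk)"
      unfolding l_def path_len_def Let_def H_def by (rule not_less_Least)
    then show ?thesis using Suc by simp
  qed
  have Aim: "A = (\<lambda>k. tnode d p0 MD s (H - k) x) ` {..l}" unfolding A_def by auto
  have inj: "inj_on (\<lambda>k. tnode d p0 MD s (H - k) x) {..l}"
    using lH by (auto simp: inj_on_def tnode_def)
  have cardA: "card A = l + 1" using Aim inj by (simp add: card_image)
  have finA: "finite A" using Aim by simp
  have dis: "mk \<inter> A = {}" using notin unfolding A_def by auto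
  have NNfin: "finite (NN P d p0 MD s)" using fin by (rule finite_NN)
  have finmk: "finite mk" using g NNfin unfolding good_def by (auto intro: finite_subset)
  have vl: "tnode d p0 MD s (H - l) x \<in> A" unfolding A_def by auto
  have "card Q \<le> (\<Sum>v\<in>A. card (subtree_pts P d p0 MD s v))"
    unfolding Q_def using vl finA by (intro member_le_sum) auto
  have c2: "c \<le> (l + 1) + card Q * (1 + slen)"
  proof -
    have "(\<Sum>y\<in>Q. 1 + (if upd y then slen else 0)) \<le> (\<Sum>y\<in>Q. 1 + slen)"
      by (intro sum_mono) auto
    then show ?thesis using c by simp
  qed
  have "phi P d p0 MD s mk' = card mk + card A + (1 + slen) *
      ((\<Sum>v\<in>mk. card (subtree_pts P d p0 MD s v)) + (\<Sum>v\<in>A. card (subtree_pts P d p0 MD s v)))"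
    unfolding phi_def mk' slen_def using finA finmk dis
    by (simp add: card_Un_disjoint sum.union_disjoint)
  then show "c + phi P d p0 MD s mk \<le> phi P d p0 MD s mk'"
  proof -
    have "card Q * (1 + slen) \<le> (1 + slen) * (\<Sum>v\<in>A. card (subtree_pts P d p0 MD s v))"
      using \<open>card Q \<le> _\<close> by (metis mult.commute mult_le_mono2)
    then show ?thesis using c2 cardA \<open>phi P d p0 MD s mk' = _\<close> unfolding phi_def slen_def
      by (simp add: distrib_left)
  qed
  show "good P d p0 MD s mk' Z"
    unfolding good_def
  proof (intro conjI ballI)
    show "mk' \<subseteq> NN P d p0 MD s"
      using g xP unfolding mk' A_def good_def NN_def H_def by force
    fix z assume zZ: "z \<in> Z"
    then have "z \<noteq> x" using xZ by auto
    have zP: "z \<in> P" using ZP zZ by auto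
    show "tnode d p0 MD s (theight P d p0 MD s) z \<notin> mk'"
    proof
      assume "tnode d p0 MD s (theight P d p0 MD s) z \<in> mk'"
      moreover have "tnode d p0 MD s (theight P d p0 MD s) z \<notin> mk" using g zZ unfolding good_def by auto
      ultimately obtain k where "k \<le> l" "tnode d p0 MD s H z = tnode d p0 MD s (H - k) x"
        unfolding mk' A_def H_def by auto
      then have "cell d p0 MD s H z = cell d p0 MD s H x" "H - k = H" by (auto simp: tnode_def)
      then show False using sep zP xP \<open>z \<noteq> x\<close> unfolding sepd_def H_def by metis
    qed
  qed
qed

lemma phi_mono:
  assumes "finite P" "mk \<subseteq> NN P d p0 MD s"
  shows "phi P d p0 MD s mk \<le> phi P d p0 MD s (NN P d p0 MD s)"
proof -
  have f: "finite (NN P d p0 MD s)" using assms(1) by (rule finite_NN)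
  have "card mk \<le> card (NN P d p0 MD s)" using f assms(2) by (rule card_mono)
  moreover have "(\<Sum>v\<in>mk. card (subtree_pts P d p0 MD s v)) \<le> (\<Sum>v\<in>NN P d p0 MD s. card (subtree_pts P d p0 MD s v))"
    using f assms(2) by (intro sum_mono2) auto
  ultimately show ?thesis unfolding phi_def by (intro add_le_mono mult_le_mono2)
qed

lemma sum3: "(\<Sum>t<(3::nat). f t) = f 0 + f 1 + (f 2 :: nat)"
  by (simp add: numeral_3_eq_3 numeral_2_eq_2)

lemma seq_bound:
  assumes fin: "finite P" and sep: "\<forall>t<3. sepd P d p0 MD (sh t)"
  shows "set xs \<subseteq> P \<Longrightarrow> distinct xs \<Longrightarrow> (\<forall>t<3. good P d p0 MD (sh t) (snd st t) (set xs)) \<Longrightarrow>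
    open_seq P d p0 MD sh st xs + (\<Sum>t<3. phi P d p0 MD (sh t) (snd st t))
      \<le> (\<Sum>t<3. phi P d p0 MD (sh t) (NN P d p0 MD (sh t)))"
proof (induction xs arbitrary: st)
  case Nil
  then show ?case using phi_mono[OF fin] unfolding good_def by (auto intro!: sum_mono)
next
  case (Cons x xs)
  obtain w mk where st: "st = (w, mk)" by fastforce
  obtain w1 m1 c1 where o1: "open_tree P d p0 MD (sh 0) w (mk 0) x = (w1, m1, c1)" by (metis prod_cases3)
  obtain w2 m2 c2 where o2: "open_tree P d p0 MD (sh 1) w1 (mk 1) x = (w2, m2, c2)" by (metis prod_cases3)
  obtain w3 m3 c3 where o3: "open_tree P d p0 MD (sh 2) w2 (mk 2) x = (w3, m3, c3)" by (metis prod_cases3)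
  have mo: "multi_open P d p0 MD sh st x = ((w3, mk(0 := m1, 1 := m2, 2 := m3)), c1 + c2 + c3)"
    unfolding multi_open_def st using o1 o2 o3 by simp
  have xP: "x \<in> P" and xsP: "set xs \<subseteq> P" and xxs: "x \<notin> set xs" and dxs: "distinct xs"
    using Cons.prems by auto
  have g: "good P d p0 MD (sh t) (mk t) (insert x (set xs))" if "t < 3" for t
    using Cons.prems(3) that st by auto
  note S = open_tree_step[OF fin _ xP _ xxs xsP]
  have s0: "sepd P d p0 MD (sh 0)" and s1: "sepd P d p0 MD (sh 1)" and s2: "sepd P d p0 MD (sh 2)"
    using sep by auto
  have A0: "c1 + phi P d p0 MD (sh 0) (mk 0) \<le> phi P d p0 MD (sh 0) m1" "good P d p0 MD (sh 0) m1 (set xs)"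
    using S[OF s0 g[of 0] o1] by auto
  have A1: "c2 + phi P d p0 MD (sh 1) (mk 1) \<le> phi P d p0 MD (sh 1) m2" "good P d p0 MD (sh 1) m2 (set xs)"
    using S[OF s1 g[of 1] o2] by auto
  have A2: "c3 + phi P d p0 MD (sh 2) (mk 2) \<le> phi P d p0 MD (sh 2) m3" "good P d p0 MD (sh 2) m3 (set xs)"
    using S[OF s2 g[of 2] o3] by auto
  define st' where "st' = (w3, mk(0 := m1, 1 := m2, 2 := m3))"
  have "\<forall>t<3. good P d p0 MD (sh t) (snd st' t) (set xs)"
  proof (intro allI impI)
    fix t :: nat assume "t < 3"
    then have "t = 0 \<or> t = 1 \<or> t = 2" by auto
    then show "good P d p0 MD (sh t) (snd st' t) (set xs)" using A0 A1 A2 unfolding st'_def by auto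
  qed
  from Cons.IH[OF xsP dxs this]
  have IH: "open_seq P d p0 MD sh st' xs + (phi P d p0 MD (sh 0) m1 + phi P d p0 MD (sh 1) m2 + phi P d p0 MD (sh 2) m3)
      \<le> (\<Sum>t<3. phi P d p0 MD (sh t) (NN P d p0 MD (sh t)))"
    unfolding sum3 st'_def by simp
  have "open_seq P d p0 MD sh st (x # xs) = c1 + c2 + c3 + open_seq P d p0 MD sh st' xs"
    using mo unfolding st'_def by simp
  then show ?case using IH A0(1) A1(1) A2(1) unfolding sum3 st by simp
qed

lemma phi_NN:
  assumes fin: "finite P"
  shows "phi P d p0 MD s (NN P d p0 MD s) \<le> (2 + sample_update_cost (card P)) * ((theight P d p0 MD s + 1) * card P)"
proof -
  define H where "H = theight P d p0 MD s"
  define N where "N = NN P d p0 MD s"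
  have fN: "finite N" unfolding N_def using fin by (rule finite_NN)
  have cN: "card N \<le> (H + 1) * card P"
  proof -
    have "card N \<le> card ({..H} \<times> P)" unfolding N_def NN_def H_def by (rule card_image_le) (simp add: fin)
    then show ?thesis by (simp add: card_cartesian_product)
  qed
  have "(\<Sum>v\<in>N. card (subtree_pts P d p0 MD s v)) = (\<Sum>v\<in>N. \<Sum>y\<in>P. if tnode d p0 MD s (fst v) y = v then 1 else 0)"
    unfolding subtree_pts_def using fin by (intro sum.cong refl) (simp add: sum.inter_filter[symmetric])
  also have "\<dots> = (\<Sum>y\<in>P. \<Sum>v\<in>N. if tnode d p0 MD s (fst v) y = v then 1 else 0)"
    by (rule sum.swap)
  also have "\<dots> \<le> (\<Sum>y\<in>P. H + 1)"
  proof (rule sum_mono)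
    fix y assume yP: "y \<in> P"
    have "(\<Sum>v\<in>N. if tnode d p0 MD s (fst v) y = v then 1 else 0) = card {v \<in> N. tnode d p0 MD s (fst v) y = v}"
      using fN by (simp add: sum.inter_filter[symmetric])
    also have "\<dots> \<le> card ((\<lambda>i. tnode d p0 MD s i y) ` {..H})"
    proof (rule card_mono)
      show "{v \<in> N. tnode d p0 MD s (fst v) y = v} \<subseteq> (\<lambda>i. tnode d p0 MD s i y) ` {..H}"
      proof
        fix v assume v: "v \<in> {v \<in> N. tnode d p0 MD s (fst v) y = v}"
        then obtain i y' where "i \<le> H" "v = tnode d p0 MD s i y'" unfolding N_def NN_def H_def by auto
        then have "fst v \<le> H" by (simp add: tnode_def)
        then show "v \<in> (\<lambda>i. tnode d p0 MD s i y) ` {..H}" using v by (intro image_eqI[where x="fst v"]) auto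
      qed
    qed simp
    also have "\<dots> \<le> H + 1" using card_image_le[OF finite_atMost, of "(\<lambda>i. tnode d p0 MD s i y)" H] by simp
    finally show "(\<Sum>v\<in>N. if tnode d p0 MD s (fst v) y = v then 1 else 0) \<le> H + 1" .
  qed
  also have "\<dots> = (H + 1) * card P" by simp
  finally have sN: "(\<Sum>v\<in>N. card (subtree_pts P d p0 MD s v)) \<le> (H + 1) * card P" .
  have "phi P d p0 MD s N \<le> (H + 1) * card P + (1 + sample_update_cost (card P)) * ((H + 1) * card P)"
    unfolding phi_def using cN sN by (intro add_le_mono mult_le_mono2) auto
  moreover have "(2 + sample_update_cost (card P)) * ((H + 1) * card P) = (H + 1) * card P + (1 + sample_update_cost (card P)) * ((H + 1) * card P)"
    by simp
  ultimately show ?thesis unfolding N_def H_def by linarith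
qed


lemma floor_sep:
  fixes a b side :: real
  assumes "side > 0" "\<bar>a - b\<bar> \<ge> side"
  shows "\<lfloor>a / side\<rfloor> \<noteq> \<lfloor>b / side\<rfloor>"
proof
  assume eq: "\<lfloor>a / side\<rfloor> = \<lfloor>b / side\<rfloor>"
  have "\<bar>a / side - b / side\<bar> < 1"
    using eq of_int_floor_le[of "a/side"] of_int_floor_le[of "b/side"]
      real_of_int_floor_add_one_gt[of "a/side"] real_of_int_floor_add_one_gt[of "b/side"]
    by linarith
  moreover have "\<bar>a / side - b / side\<bar> = \<bar>a - b\<bar> / side"
    using assms(1) by (simp add: diff_divide_distrib[symmetric])
  ultimately have "\<bar>a - b\<bar> / side < 1" by simp
  then have "\<bar>a - b\<bar> < side" using assms(1) by (simp add: divide_less_eq)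
  then show False using assms(2) by simp
qed

lemma diff_coord:
  fixes d :: nat and x y :: pt
  assumes "\<forall>x\<in>P. \<forall>j\<ge>d. x j = 0" "x \<in> P" "y \<in> P" "x \<noteq> y"
  obtains j where "j < d" "x j \<noteq> y j"
proof -
  obtain j where "x j \<noteq> y j" using assms(4) by (meson ext)
  moreover have "j < d"
  proof (rule ccontr)
    assume "\<not> j < d"
    then have "x j = 0" "y j = 0" using assms(1-3) by auto
    then show False using calculation by simp
  qed
  ultimately show ?thesis using that by blast
qed

lemma edist_pos:
  fixes d :: nat and x y :: pt
  assumes "\<forall>x\<in>P. \<forall>j\<ge>d. x j = 0" "x \<in> P" "y \<in> P" "x \<noteq> y"
  shows "edist d x y > 0"
proof -
  obtain j where j: "j < d" "x j \<noteq> y j" using diff_coord[OF assms] .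
  have "0 < (x j - y j)^2" using j by simp
  also have "\<dots> \<le> (\<Sum>j<d. (x j - y j)^2)" using j by (intro member_le_sum) auto
  finally show ?thesis unfolding edist_def by simp
qed

lemma geom:
  assumes d1: "d \<ge> 1" and fin: "finite P" and c2: "card P \<ge> 2"
    and z: "\<forall>x\<in>P. \<forall>j\<ge>d. x j = 0"
    and m1: "max_dist P d \<le> MD" and m2: "MD \<le> 2 * max_dist P d"
  shows "sepd P d p0 MD s \<and> real (theight P d p0 MD s) \<le> log 2 (real d * aspect_ratio P d) + 3
     \<and> 1 \<le> real d * aspect_ratio P d"
proof -
  define M where "M = max_dist P d"
  define md where "md = min_dist P d"
  define D where "D = {edist d x y | x y. x \<in> P \<and> y \<in> P \<and> x \<noteq> y}"
  define D' where "D' = {edist d x y | x y. x \<in> P \<and> y \<in> P}"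
  have "\<not> card P \<le> Suc 0" using c2 by simp
  then obtain a b where ab: "a \<in> P" "b \<in> P" "a \<noteq> b" using card_le_Suc0_iff_eq[OF fin] by blast
  have finD': "finite D'"
  proof -
    have "D' = (\<lambda>(x, y). edist d x y) ` (P \<times> P)" unfolding D'_def by auto
    then show ?thesis using fin by simp
  qed
  have finD: "finite D" using finD' by (rule rev_finite_subset) (auto simp: D_def D'_def)
  have Dne: "edist d a b \<in> D" using ab unfolding D_def by blast
  have mdle: "md \<le> edist d x y" if "x \<in> P" "y \<in> P" "x \<noteq> y" for x y
    unfolding md_def min_dist_def using finD that by (intro Min_le) (auto simp: D_def)
  have mdpos: "md > 0"
  proof -
    have "md \<in> D" unfolding md_def min_dist_def D_def[symmetric] using finD Dne by (intro Min_in) auto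
    then show ?thesis unfolding D_def using edist_pos[OF z] by auto
  qed
  have Mge: "edist d a b \<le> M"
    unfolding M_def max_dist_def D'_def[symmetric] using finD' ab by (intro Max_ge) (auto simp: D'_def)
  have Mmd: "md \<le> M" using mdle[OF ab] Mge by simp
  have Mpos: "M > 0" using Mmd mdpos by simp
  have MDpos: "MD > 0" using m1 Mpos unfolding M_def by simp
  define Dl where "Dl = real d * (M / md)"
  have DlA: "Dl = real d * aspect_ratio P d" unfolding Dl_def aspect_ratio_def M_def md_def by simp
  have Dl1: "1 \<le> Dl"
  proof -
    have "1 \<le> M / md" using Mmd mdpos by simp
    moreover have "1 \<le> real d" using d1 by simp
    ultimately show ?thesis unfolding Dl_def using mult_mono[of 1 "real d" 1 "M/md"] by simp
  qed
  define i0 where "i0 = nat \<lceil>log 2 Dl\<rceil> + 2"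
  have logpos: "0 \<le> log 2 Dl" using Dl1 by simp
  have p2: "Dl \<le> 2 ^ nat \<lceil>log 2 Dl\<rceil>"
  proof -
    have "Dl = 2 powr (log 2 Dl)" using Dl1 by simp
    also have "\<dots> \<le> 2 powr (real (nat \<lceil>log 2 Dl\<rceil>))"
      using logpos by (intro powr_mono) linarith+
    also have "\<dots> = 2 ^ nat \<lceil>log 2 Dl\<rceil>" by (simp add: powr_realpow)
    finally show ?thesis .
  qed
  have i0p: "4 * Dl \<le> 2 ^ i0" unfolding i0_def using p2 by (simp add: power_add)
  define side where "side = 2 * MD / 2 ^ i0"
  have sidepos: "side > 0" unfolding side_def using MDpos by simp
  have side_le: "side \<le> md / real d"
  proof -
    have "side \<le> 4 * M / 2 ^ i0" unfolding side_def using m2 unfolding M_def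
      by (intro divide_right_mono) auto
    also have "\<dots> \<le> 4 * M / (4 * Dl)"
      using i0p Dl1 Mpos by (intro divide_left_mono) auto
    also have "\<dots> = md / real d" unfolding Dl_def using d1 Mpos mdpos by (simp add: field_simps)
    finally show ?thesis .
  qed
  have sep0: "cell d p0 MD s i0 x \<noteq> cell d p0 MD s i0 y" if xy: "x \<in> P" "y \<in> P" "x \<noteq> y" for x y
  proof -
    have "\<exists>j<d. md^2 / real d \<le> (x j - y j)^2"
    proof (rule ccontr)
      assume "\<not> ?thesis"
      then have lt: "\<And>j. j < d \<Longrightarrow> (x j - y j)^2 < md^2 / real d" by (simp add: not_le)
      have "(\<Sum>j<d. (x j - y j)^2) < (\<Sum>j<d. md^2 / real d)"
        using d1 lt by (intro sum_strict_mono) (auto simp: lessThan_empty_iff)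
      also have "\<dots> = md^2" using d1 by simp
      finally have "edist d x y < sqrt (md^2)" unfolding edist_def by (intro real_sqrt_less_mono)
      then have "edist d x y < md" using mdpos by simp
      then show False using mdle[OF xy] by simp
    qed
    then obtain j where j: "j < d" "md^2 / real d \<le> (x j - y j)^2" by blast
    have "(md / real d)^2 \<le> md^2 / real d"
      using d1 by (simp add: power_divide divide_left_mono power2_eq_square)
    then have "(md / real d)^2 \<le> (x j - y j)^2" using j by simp
    then have "md / real d \<le> \<bar>x j - y j\<bar>"
      using mdpos d1 by (metis abs_le_square_iff abs_of_nonneg divide_nonneg_nonneg of_nat_0_le_iff less_imp_le)
    then have "side \<le> \<bar>(x j + s - (p0 j - MD)) - (y j + s - (p0 j - MD))\<bar>" using side_le by simp
    then have "\<lfloor>(x j + s - (p0 j - MD)) / side\<rfloor> \<noteq> \<lfloor>(y j + s - (p0 j - MD)) / side\<rfloor>"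
      using sidepos by (intro floor_sep) auto
    moreover have "i0 \<noteq> 0" unfolding i0_def by simp
    ultimately show ?thesis unfolding cell_def side_def using j(1) by (auto dest: fun_cong[where x=j])
  qed
  have ex: "\<forall>x\<in>P. \<forall>y\<in>P. x \<noteq> y \<longrightarrow> cell d p0 MD s i0 x \<noteq> cell d p0 MD s i0 y" using sep0 by blast
  have sep: "sepd P d p0 MD s" unfolding sepd_def theight_def by (rule LeastI[of _ i0]) (rule ex)
  have "theight P d p0 MD s \<le> i0" unfolding theight_def by (rule Least_le) (rule ex)
  then have "real (theight P d p0 MD s) \<le> real i0" by simp
  also have "\<dots> \<le> log 2 Dl + 3" unfolding i0_def using logpos by linarith
  finally show ?thesis using sep DlA Dl1 by simp
qed


theorem mainTheorem4:
  "\<exists>C>0. \<forall>(d::nat) (P::pt set) (p0::pt) (MD::real) (sh::nat \<Rightarrow> real) (xs::pt list).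
     d \<ge> 1 \<longrightarrow> finite P \<longrightarrow> card P \<ge> 2 \<longrightarrow>
     (\<forall>x\<in>P. \<forall>j\<ge>d. x j = 0) \<longrightarrow>
     p0 \<in> P \<longrightarrow>
     max_dist P d \<le> MD \<longrightarrow> MD \<le> 2 * max_dist P d \<longrightarrow>
     (\<forall>t<3. 0 \<le> sh t \<and> sh t \<le> MD) \<longrightarrow>
     set xs \<subseteq> P \<longrightarrow> distinct xs \<longrightarrow>
     real (open_seq P d p0 MD sh (init_state d MD) xs)
       \<le> C * real (card P) * (1 + log 2 (real d * aspect_ratio P d)) * log 2 (real (card P))"
proof (intro exI[of _ 60] conjI allI impI)
  fix d :: nat and P :: "pt set" and p0 :: pt and MD :: real and sh :: "nat \<Rightarrow> real" and xs :: "pt list"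
  assume d1: "d \<ge> 1" and fin: "finite P" and c2: "card P \<ge> 2" and z: "\<forall>x\<in>P. \<forall>j\<ge>d. x j = 0"
    and "p0 \<in> P" and m1: "max_dist P d \<le> MD" and m2: "MD \<le> 2 * max_dist P d"
    and "\<forall>t<3. 0 \<le> sh t \<and> sh t \<le> MD" and xsP: "set xs \<subseteq> P" and dxs: "distinct xs"
  define L where "L = log 2 (real d * aspect_ratio P d)"
  define n where "n = card P"
  define slen where "slen = sample_update_cost n"
  note G = geom[OF d1 fin c2 z m1 m2]
  have L0: "0 \<le> L" unfolding L_def using G[where s=0 and ?p0.0=p0] by simp
  have sep: "\<forall>t<3. sepd P d p0 MD (sh t)" using G by blast
  have good0: "\<forall>t<3. good P d p0 MD (sh t) (snd (init_state d MD) t) (set xs)"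
    unfolding good_def init_state_def by simp
  have phi0: "phi P d p0 MD s {} = 0" for s unfolding phi_def by simp
  have main: "open_seq P d p0 MD sh (init_state d MD) xs \<le> (\<Sum>t<3. phi P d p0 MD (sh t) (NN P d p0 MD (sh t)))"
    using seq_bound[OF fin sep xsP dxs good0] unfolding init_state_def by (simp add: phi0)
  have logn: "1 \<le> log 2 (real n)" unfolding n_def using c2 by simp
  have sl: "real slen \<le> log 2 (real n) + 2"
  proof -
    have "real (nat \<lceil>log 2 (real n)\<rceil>) \<le> log 2 (real n) + 1" using logn by linarith
    then show ?thesis unfolding slen_def sample_update_cost_def by simp
  qed
  have each: "real (phi P d p0 MD s (NN P d p0 MD s)) \<le> 20 * real n * (1 + L) * log 2 (real n)" for s
  proof -
    have "real (phi P d p0 MD s (NN P d p0 MD s)) \<le> real ((2 + slen) * ((theight P d p0 MD s + 1) * n))"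
      using phi_NN[OF fin] unfolding slen_def n_def by (simp only: of_nat_le_iff)
    also have "\<dots> = (2 + real slen) * ((real (theight P d p0 MD s) + 1) * real n)" by (simp add: algebra_simps)
    also have "\<dots> \<le> (5 * log 2 (real n)) * ((4 * (1 + L)) * real n)"
    proof (intro mult_mono)
      show "2 + real slen \<le> 5 * log 2 (real n)" using sl logn by linarith
      have "real (theight P d p0 MD s) \<le> L + 3" using G[where s=s] unfolding L_def by simp
      moreover have "L + 4 \<le> 4 * (1 + L)" using L0 by simp
      ultimately show "real (theight P d p0 MD s) + 1 \<le> 4 * (1 + L)" by linarith
    qed (use L0 logn in auto)
    also have "\<dots> = 20 * real n * (1 + L) * log 2 (real n)" by (simp add: algebra_simps)
    finally show ?thesis .
  qed
  have "real (open_seq P d p0 MD sh (init_state d MD) xs) \<le> real (\<Sum>t<3. phi P d p0 MD (sh t) (NN P d p0 MD (sh t)))"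
    using main by (simp only: of_nat_le_iff)
  also have "\<dots> = (\<Sum>t<3. real (phi P d p0 MD (sh t) (NN P d p0 MD (sh t))))" by simp
  also have "\<dots> \<le> (\<Sum>t<(3::nat). 20 * real n * (1 + L) * log 2 (real n))"
    by (intro sum_mono each)
  also have "\<dots> = 60 * real n * (1 + L) * log 2 (real n)" by simp
  finally show "real (open_seq P d p0 MD sh (init_state d MD) xs)
       \<le> 60 * real (card P) * (1 + log 2 (real d * aspect_ratio P d)) * log 2 (real (card P))"
    unfolding L_def n_def .
qed simp

end
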